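(* Let $K\le L$ be positive integers with $2^K>N$, and consider a nonempty configuration. If $A(G)\ge 2^K$, then the expected number of times a full execution of the inter-level sampler enters the refinement loop is at most $N/(2^K-N)$. If $A(G)\ge 2^L$, this bound improves to $N/(2^L-N)$.
   Context: Fix an integer $b\ge 2$. There is a set $\mathcal L$ of $N$ levels, which are consecutive integers. Each level $\ell$ holds a finite (possibly empty) multiset of normalized significands, each an integer in $[2^{b-1},2^b)$. Let $z$ be the total number of stored significands over all levels; assume $z<2^b$. For each level, $SS_\ell$ is the sum of its significands (so $SS_\ell=0$ iff the level is empty); set $SS_\ell=0$ for integers $\ell\notin\mathcal L$. The level weight is $W_\ell=SS_\ell2^\ell$. For an integer global shift $G$, $A_\ell(G)=\lfloor W_\ell2^G\rfloor+1$ if $SS_\ell>0$ and $A_\ell(G)=0$ if $SS_\ell=0$; $A(G)=\sum_\ell A_\ell(G)$ and $M(G)=\sum_\ell W_\ell2^G$. The configuration is nonempty if $z\ge1$. Inter-level sampler (Algorithm 1), with shift $G$ and $A=A(G)$: it performs independent outer iterations. In an outer iteration, draw $x$ uniformly from $\{1,\dots,A\}$ and scan the levels in decreasing order starting from the largest nonempty level. At the current level $\ell$: if $x<A_\ell(G)$, return $\ell$; if $x=A_\ell(G)$, run the refinement loop for $m=1,2,\dots$: draw $r$ uniformly from $\{0,\dots,2^b-1\}$ independently, let $t=\lfloor SS_\ell 2^{\ell+G+mb}\rfloor \bmod 2^b$; if $r<t$ return $\ell$; else if $r>t$ or $\ell+G+mb\ge 0$, abandon this outer iteration and start a new one; otherwise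 continue with $m+1$. If $x>A_\ell(G)$, set $x\leftarrow x-A_\ell(G)$ and move to the next lower level. *)

theory Defs
  imports "HOL-Probability.Probability"
begin

definition levels :: "int \<Rightarrow> nat \<Rightarrow> int set" where
  "levels lo N = {lo .. lo + int N - 1}"

definition SS :: "int \<Rightarrow> nat \<Rightarrow> (int \<Rightarrow> nat multiset) \<Rightarrow> int \<Rightarrow> nat" where
  "SS lo N S l = (if l \<in> levels lo N then sum_mset (S l) else 0)"

definition W :: "(int \<Rightarrow> nat) \<Rightarrow> int \<Rightarrow> real" where
  "W ss l = real (ss l) * 2 powr real_of_int l"

definition A_lvl :: "(int \<Rightarrow> nat) \<Rightarrow> int \<Rightarrow> int \<Rightarrow> int" where
  "A_lvl ss G l = (if ss l > 0 then \<lfloor>W ss l * 2 powr real_of_int G\<rfloor> + 1 else 0)"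

definition A_tot :: "int \<Rightarrow> nat \<Rightarrow> (int \<Rightarrow> nat) \<Rightarrow> int \<Rightarrow> int" where
  "A_tot lo N ss G = (\<Sum>l\<in>levels lo N. A_lvl ss G l)"

datatype outcome = Ret int | Abandon

partial_function (spmf) refine ::
  "nat \<Rightarrow> (int \<Rightarrow> nat) \<Rightarrow> int \<Rightarrow> int \<Rightarrow> nat \<Rightarrow> outcome spmf" where
  "refine b ss G l m =
     bind_spmf (spmf_of_set {0 ..< (2::int) ^ b}) (\<lambda>r.
       (let t = \<lfloor>real (ss l) * 2 powr real_of_int (l + G + int m * int b)\<rfloor> mod 2 ^ b in
        if r < t then return_spmf (Ret l)
        else if r > t \<or> l + G + int m * int b \<ge> 0 then return_spmf Abandon
        else refine b ss G l (m + 1)))"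

partial_function (spmf) scan ::
  "nat \<Rightarrow> int \<Rightarrow> (int \<Rightarrow> nat) \<Rightarrow> int \<Rightarrow> int \<Rightarrow> int \<Rightarrow> (outcome \<times> nat) spmf" where
  "scan b lo ss G x l =
     (if l < lo then return_pmf None
      else if x < A_lvl ss G l then return_spmf (Ret l, 0)
      else if x = A_lvl ss G l then
        bind_spmf (refine b ss G l 1) (\<lambda>res. return_spmf (res, 1))
      else scan b lo ss G (x - A_lvl ss G l) (l - 1))"

definition outer_iter ::
  "nat \<Rightarrow> int \<Rightarrow> nat \<Rightarrow> (int \<Rightarrow> nat) \<Rightarrow> int \<Rightarrow> (outcome \<times> nat) spmf" where
  "outer_iter b lo N ss G =
     bind_spmf (spmf_of_set {1 .. A_tot lo N ss G}) (\<lambda>x.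
       scan b lo ss G x (Max {l \<in> levels lo N. ss l > 0}))"

partial_function (spmf) sampler ::
  "nat \<Rightarrow> int \<Rightarrow> nat \<Rightarrow> (int \<Rightarrow> nat) \<Rightarrow> int \<Rightarrow> (int \<times> nat) spmf" where
  "sampler b lo N ss G =
     bind_spmf (outer_iter b lo N ss G) (\<lambda>(res, e).
       (case res of
          Ret l \<Rightarrow> return_spmf (l, e)
        | Abandon \<Rightarrow> bind_spmf (sampler b lo N ss G) (\<lambda>(l, c). return_spmf (l, c + e))))"

definition expected_refinements ::
  "nat \<Rightarrow> int \<Rightarrow> nat \<Rightarrow> (int \<Rightarrow> nat) \<Rightarrow> int \<Rightarrow> ennreal" where
  "expected_refinements b lo N ss G =
     (\<integral>\<^sup>+ p. ennreal (real (snd p)) \<partial>measure_spmf (sampler b lo N ss G))"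

end

theory Submission
  imports Defs
begin

lemma nn_integral_bind_spmf:
  "(\<integral>\<^sup>+ x. f x \<partial>measure_spmf (bind_spmf p g)) = (\<integral>\<^sup>+ y. (\<integral>\<^sup>+ x. f x \<partial>measure_spmf (g y)) \<partial>measure_spmf p)"
  unfolding measure_spmf_bind
  apply (subst nn_integral_bind[where B="count_space UNIV"])
  apply (auto simp: measurable_count_space_eq1 o_def)
  done

lemma nn_integral_return_spmf:
  "(\<integral>\<^sup>+ x. f x \<partial>measure_spmf (return_spmf y)) = f y"
  by (simp add: measure_spmf_return_spmf nn_integral_return)

lemma scan_support:
  "(r,e) \<in> set_spmf (scan b lo ss G x l) \<Longrightarrow> (e = 0 \<and> (\<exists>l'. r = Ret l')) \<or> e = 1"
proof (induction "nat (l - lo + 1)" arbitrary: x l rule: less_induct)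
  case less
  show ?case
  proof (cases "l < lo")
    case True
    with less.prems show ?thesis by (subst (asm) scan.simps) simp
  next
    case False
    show ?thesis
    proof (cases "x < A_lvl ss G l \<or> x = A_lvl ss G l")
      case True
      with less.prems False show ?thesis by (subst (asm) scan.simps) (auto simp: set_bind_spmf)
    next
      case c: False
      have "(r,e) \<in> set_spmf (scan b lo ss G (x - A_lvl ss G l) (l - 1))"
        using less.prems False c by (subst (asm) scan.simps) auto
      then show ?thesis using less.hyps[of "l - 1"] False by auto
    qed
  qed
qed

lemma scan_R:
  "\<exists>R. finite R \<and> card R \<le> nat (l - lo + 1) \<and>
     (\<forall>x. x \<notin> R \<longrightarrow> (\<forall>p\<in>set_spmf (scan b lo ss G x l). snd p = 0))"
proof (induction "nat (l - lo + 1)" arbitrary: l rule: less_induct)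
  case less
  show ?case
  proof (cases "l < lo")
    case True
    then show ?thesis by (intro exI[of _ "{}"]) (subst scan.simps; simp)
  next
    case False
    define a where "a = A_lvl ss G l"
    obtain R where R: "finite R" "card R \<le> nat (l - 1 - lo + 1)"
      "\<forall>x. x \<notin> R \<longrightarrow> (\<forall>p\<in>set_spmf (scan b lo ss G x (l - 1)). snd p = 0)"
      using less.hyps[of "l - 1"] False by auto
    let ?R = "insert a ((\<lambda>y. y + a) ` R)"
    have "card ?R \<le> Suc (card R)"
      using card_image_le[OF R(1), of "\<lambda>y. y + a"] by (simp add: card_insert_if R(1))
    also have "\<dots> \<le> nat (l - lo + 1)" using R(2) False by simp
    finally have c: "card ?R \<le> nat (l - lo + 1)" .
    have "\<forall>p\<in>set_spmf (scan b lo ss G x l). snd p = 0" if "x \<notin> ?R" for x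
    proof (cases "x < a")
      case True
      then show ?thesis using False by (subst scan.simps) (simp add: a_def)
    next
      case xa: False
      have xa': "x \<noteq> a" using that by auto
      have "x - a \<notin> R" using that by force
      then show ?thesis using False xa xa' R(3) by (subst scan.simps) (simp add: a_def[symmetric])
    qed
    then show ?thesis using c R(1) by (intro exI[of _ ?R]) auto
  qed
qed


lemma adm_nn:
  fixes h :: "'a::countable \<Rightarrow> ennreal"
  shows "ccpo.admissible lub_spmf (ord_spmf (=)) (\<lambda>p. (\<integral>\<^sup>+x. h x \<partial>measure_spmf p) \<le> c)"
proof (rule ccpo.admissibleI)
  fix Y :: "'a spmf set"
  assume chain: "Complete_Partial_Order.chain (ord_spmf (=)) Y" and ne: "Y \<noteq> {}"
    and all: "\<forall>p\<in>Y. (\<integral>\<^sup>+x. h x \<partial>measure_spmf p) \<le> c"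
  have "(\<integral>\<^sup>+x. h x \<partial>measure_spmf (lub_spmf Y)) = \<integral>\<^sup>+x. ennreal (spmf (lub_spmf Y) x) * h x \<partial>count_space UNIV"
    by (rule nn_integral_measure_spmf)
  also have "\<dots> = \<integral>\<^sup>+x. (SUP p\<in>Y. ennreal (spmf p x) * h x) \<partial>count_space UNIV"
    using ennreal_spmf_lub_spmf[OF chain ne] by (simp add: SUP_mult_right_ennreal ne)
  also have "\<dots> = (SUP p\<in>Y. \<integral>\<^sup>+x. ennreal (spmf p x) * h x \<partial>count_space UNIV)"
  proof (rule nn_integral_monotone_convergence_SUP_countable[OF ne])
    show "Complete_Partial_Order.chain (\<le>) ((\<lambda>p x. ennreal (spmf p x) * h x) ` Y)"
    proof (rule chainI)
      fix f g assume "f \<in> (\<lambda>p x. ennreal (spmf p x) * h x) ` Y" "g \<in> (\<lambda>p x. ennreal (spmf p x) * h x) ` Y"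
      then obtain p q where pq: "p \<in> Y" "q \<in> Y" "f = (\<lambda>x. ennreal (spmf p x) * h x)" "g = (\<lambda>x. ennreal (spmf q x) * h x)" by auto
      from chainD[OF chain pq(1,2)] show "f \<le> g \<or> g \<le> f"
        unfolding pq(3,4) by (auto simp: le_fun_def intro!: mult_right_mono dest: ord_spmf_eq_leD)
    qed
  qed simp
  also have "\<dots> \<le> c" using all by (auto intro!: SUP_least simp: nn_integral_measure_spmf)
  finally show "(\<integral>\<^sup>+x. h x \<partial>measure_spmf (lub_spmf Y)) \<le> c" .
qed


lemma outer_e1:
  fixes ss :: "int \<Rightarrow> nat"
  assumes ne: "{l \<in> levels lo N. ss l > 0} \<noteq> {}"
    and AN: "int N < A_tot lo N ss G"
  shows "(\<integral>\<^sup>+p. (if snd p = 0 then 0 else 1) \<partial>measure_spmf (outer_iter b lo N ss G))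
          \<le> ennreal (real N / real_of_int (A_tot lo N ss G))"
proof -
  define A where "A = A_tot lo N ss G"
  define lm where "lm = Max {l \<in> levels lo N. ss l > 0}"
  have fin: "finite {l \<in> levels lo N. ss l > 0}" by (rule finite_subset[of _ "levels lo N"]) (auto simp: levels_def)
  have "lm \<in> {l \<in> levels lo N. ss l > 0}" unfolding lm_def using Max_in[OF fin ne] .
  then have lmle: "nat (lm - lo + 1) \<le> N" by (auto simp: levels_def)
  obtain R where R: "finite R" "card R \<le> nat (lm - lo + 1)"
      "\<forall>x. x \<notin> R \<longrightarrow> (\<forall>p\<in>set_spmf (scan b lo ss G x lm). snd p = 0)"
    using scan_R[of lm lo b ss G] by auto
  let ?f = "\<lambda>p::outcome \<times> nat. (if snd p = 0 then 0 else 1) :: ennreal"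
  have inner: "(\<integral>\<^sup>+p. ?f p \<partial>measure_spmf (scan b lo ss G x lm)) \<le> indicator R x" for x
  proof (cases "x \<in> R")
    case True
    have "(\<integral>\<^sup>+p. ?f p \<partial>measure_spmf (scan b lo ss G x lm)) \<le> (\<integral>\<^sup>+p. 1 \<partial>measure_spmf (scan b lo ss G x lm))"
      by (rule nn_integral_mono) simp
    also have "\<dots> \<le> 1" by (simp add: measure_spmf.emeasure_space_le_1)
    finally show ?thesis using True by simp
  next
    case False
    have "(\<integral>\<^sup>+p. ?f p \<partial>measure_spmf (scan b lo ss G x lm)) = (\<integral>\<^sup>+p. 0 \<partial>measure_spmf (scan b lo ss G x lm))"
      using R(3) False by (intro nn_integral_cong_AE) (auto simp: AE_measure_spmf_iff)
    then show ?thesis by simp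
  qed
  have "(\<integral>\<^sup>+p. ?f p \<partial>measure_spmf (outer_iter b lo N ss G))
      = (\<Sum>x\<in>{1..A}. \<integral>\<^sup>+p. ?f p \<partial>measure_spmf (scan b lo ss G x lm)) / of_nat (card {1..A})"
    by (simp add: outer_iter_def nn_integral_bind_spmf nn_integral_spmf_of_set A_def lm_def)
  also have "\<dots> \<le> (\<Sum>x\<in>{1..A}. indicator R x) / of_nat (card {1..A})"
    by (intro divide_right_mono_ennreal sum_mono inner)
  also have "(\<Sum>x\<in>{1..A}. indicator R x :: ennreal) = of_nat (card ({1..A} \<inter> R))"
  proof -
    have "(\<Sum>x\<in>{1..A}. indicator R x :: ennreal) = of_nat (\<Sum>x\<in>{1..A}. indicator R x :: nat)"
      unfolding of_nat_sum by (intro sum.cong) (auto simp: indicator_def)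
    then show ?thesis by (simp only: sum_indicator_eq_card[OF finite_atLeastAtMost_int])
  qed
  also have "(of_nat (card ({1..A} \<inter> R)) :: ennreal) / of_nat (card {1..A}) \<le> of_nat N / of_nat (card {1..A})"
  proof -
    have "card ({1..A} \<inter> R) \<le> N" using card_mono[OF R(1) Int_lower2, of "{1..A}"] R(2) lmle by linarith
    then show ?thesis by (intro divide_right_mono_ennreal) simp
  qed
  also have "(of_nat N :: ennreal) / of_nat (card {1..A}) = ennreal (real N / real_of_int A)"
  proof -
    have A0: "A > 0" using AN A_def by simp
    have "(of_nat N :: ennreal) / of_nat (card {1..A}) = ennreal (real N) / ennreal (real (nat A))"
      by (simp add: ennreal_of_nat_eq_real_of_nat)
    also have "\<dots> = ennreal (real N / real (nat A))" using A0 by (intro divide_ennreal) auto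
    finally show ?thesis using A0 by simp
  qed
  finally show ?thesis unfolding A_def .
qed


lemma step:
  fixes ss :: "int \<Rightarrow> nat" and g :: "(int \<times> nat) spmf"
  assumes ne: "{l \<in> levels lo N. ss l > 0} \<noteq> {}"
    and AN: "int N < A_tot lo N ss G"
    and IH: "(\<integral>\<^sup>+p. ennreal (real (snd p)) \<partial>measure_spmf g) \<le> ennreal cr"
    and crd: "cr = real N / (real_of_int (A_tot lo N ss G) - real N)"
  shows "(\<integral>\<^sup>+p. ennreal (real (snd p)) \<partial>measure_spmf (outer_iter b lo N ss G \<bind>
            (\<lambda>e. case e of (Ret l, e) \<Rightarrow> return_spmf (l, e)
                 | (Abandon, e) \<Rightarrow> g \<bind> (\<lambda>a. case a of (l, c) \<Rightarrow> return_spmf (l, c + e))))) \<le> ennreal cr"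
    (is "(\<integral>\<^sup>+p. ?h p \<partial>measure_spmf (bind_spmf _ ?F)) \<le> _")
proof -
  let ?f = "\<lambda>p::outcome \<times> nat. (if snd p = 0 then 0 else 1) :: ennreal"
  have cr0: "cr \<ge> 0" using AN crd by simp
  have supp: "(e = 0 \<and> (\<exists>l'. r = Ret l')) \<or> e = 1" if "(r,e) \<in> set_spmf (outer_iter b lo N ss G)" for r e
    using that by (auto simp: outer_iter_def set_bind_spmf dest: scan_support)
  have pt: "(\<integral>\<^sup>+p. ?h p \<partial>measure_spmf (?F q)) \<le> ennreal (1 + cr) * ?f q"
    if q: "q \<in> set_spmf (outer_iter b lo N ss G)" for q
  proof -
    obtain r e where qe: "q = (r,e)" by force
    show ?thesis
    proof (cases r)
      case (Ret l)
      have "e = 0 \<or> e = 1" using supp q qe by blast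
      then show ?thesis using Ret qe cr0 by (auto simp: nn_integral_return_spmf)
    next
      case Abandon
      have e1: "e = 1" using supp q qe Abandon by blast
      have "(\<integral>\<^sup>+p. ?h p \<partial>measure_spmf (?F q)) = (\<integral>\<^sup>+a. ennreal (real (snd a)) + 1 \<partial>measure_spmf g)"
        using Abandon qe e1 by (simp add: nn_integral_bind_spmf nn_integral_return_spmf split_beta ennreal_plus add.commute)
      also have "\<dots> = (\<integral>\<^sup>+a. ennreal (real (snd a)) \<partial>measure_spmf g) + (\<integral>\<^sup>+a. 1 \<partial>measure_spmf g)"
        by (rule nn_integral_add) simp_all
      also have "\<dots> \<le> ennreal cr + 1"
        using IH by (intro add_mono) (simp_all add: measure_spmf.emeasure_space_le_1)
      also have "\<dots> = ennreal (1 + cr) * ?f q" using qe e1 cr0 by (simp add: ennreal_plus add.commute)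
      finally show ?thesis .
    qed
  qed
  have "(\<integral>\<^sup>+p. ?h p \<partial>measure_spmf (bind_spmf (outer_iter b lo N ss G) ?F))
      = (\<integral>\<^sup>+q. (\<integral>\<^sup>+p. ?h p \<partial>measure_spmf (?F q)) \<partial>measure_spmf (outer_iter b lo N ss G))"
    by (rule nn_integral_bind_spmf)
  also have "\<dots> \<le> (\<integral>\<^sup>+q. ennreal (1 + cr) * ?f q \<partial>measure_spmf (outer_iter b lo N ss G))"
    using pt by (intro nn_integral_mono_AE) (simp add: AE_measure_spmf_iff)
  also have "\<dots> = ennreal (1 + cr) * (\<integral>\<^sup>+q. ?f q \<partial>measure_spmf (outer_iter b lo N ss G))"
    by (rule nn_integral_cmult) simp
  also have "\<dots> \<le> ennreal (1 + cr) * ennreal (real N / real_of_int (A_tot lo N ss G))"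
    by (intro mult_left_mono outer_e1[OF ne AN]) simp
  also have "\<dots> = ennreal cr"
  proof -
    have h: "(1 + cr) * (real N / real_of_int (A_tot lo N ss G)) = cr"
      using AN unfolding crd by (simp add: field_simps)
    have e: "ennreal ((1 + cr) * (real N / real_of_int (A_tot lo N ss G))) = ennreal (1 + cr) * ennreal (real N / real_of_int (A_tot lo N ss G))"
      by (rule ennreal_mult) (use cr0 AN in auto)
    show ?thesis using e h by metis
  qed
  finally show ?thesis .
qed


lemma adm2: fixes h :: "'a::countable \<Rightarrow> ennreal"
  shows "ccpo.admissible (fun_lub lub_spmf) (fun_ord (ord_spmf (=))) (\<lambda>s. (\<integral>\<^sup>+x. h x \<partial>measure_spmf (s t)) \<le> c)"
  apply (rule admissible_subst[where f="\<lambda>s. s t"])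
   apply (rule adm_nn)
  apply (rule mcont_call)
  done

lemma main_bound:
  fixes ss :: "int \<Rightarrow> nat"
  assumes ne: "{l \<in> levels lo N. ss l > 0} \<noteq> {}"
    and AN: "int N < A_tot lo N ss G"
  shows "expected_refinements b lo N ss G \<le> ennreal (real N / (real_of_int (A_tot lo N ss G) - real N))"
proof -
  define cr where "cr = real N / (real_of_int (A_tot lo N ss G) - real N)"
  have "(\<integral>\<^sup>+p. ennreal (real (snd p)) \<partial>measure_spmf (sampler b lo N ss G)) \<le> ennreal cr"
    apply (rule sampler.fixp_induct[where P="\<lambda>s. (\<integral>\<^sup>+p. ennreal (real (snd p)) \<partial>measure_spmf (s b lo N ss G)) \<le> ennreal cr"])
      apply (simp only: curry_def)
      apply (rule adm2[where h="\<lambda>p. ennreal (real (snd p))"])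
     apply simp
    apply (rule step[OF ne AN _ cr_def])
    apply assumption
    done
  then show ?thesis unfolding expected_refinements_def cr_def .
qed


lemma bound_mono:
  assumes "real_of_int A \<ge> M" "M > real N"
  shows "ennreal (real N / (real_of_int A - real N)) \<le> ennreal (real N / (M - real N))"
  using assms by (intro ennreal_leI divide_left_mono) auto

lemma ne_lemma:
  fixes b N :: nat and lo :: int and S :: "int \<Rightarrow> nat multiset"
  assumes hsig: "\<And>l s. l \<in> levels lo N \<Longrightarrow> s \<in># S l \<Longrightarrow> 2 ^ (b - 1) \<le> s \<and> s < 2 ^ b"
    and hnonempty: "(\<Sum>l\<in>levels lo N. size (S l)) \<ge> 1"
  shows "{l \<in> levels lo N. SS lo N S l > 0} \<noteq> {}"
proof -
    have "\<exists>l\<in>levels lo N. size (S l) \<noteq> 0"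
    proof (rule ccontr)
      assume "\<not> ?thesis"
      then have "(\<Sum>l\<in>levels lo N. size (S l)) = 0" by simp
      with hnonempty show False by simp
    qed
    then obtain l where l: "l \<in> levels lo N" "size (S l) \<noteq> 0" ..
    have "S l \<noteq> {#}" using l(2) by auto
    then obtain s where s: "s \<in># S l" by (meson multiset_nonemptyE)
    have "(1::nat) \<le> 2 ^ (b - 1)" by simp
    then have "s \<ge> 1" using hsig[OF l(1) s] by linarith
    moreover have "s \<le> sum_mset (S l)" proof - have "sum_mset (S l) = s + sum_mset (S l - {#s#})" by (rule sum_mset.remove[OF s]) then show ?thesis by simp qed
    ultimately have "SS lo N S l > 0" using l(1) by (simp add: SS_def)
    then show ?thesis using l(1) by blast
qed

theorem mainTheorem7:
  fixes b N K L :: nat and lo G :: int and S :: "int \<Rightarrow> nat multiset"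
  assumes hb: "b \<ge> 2"
    and hsig: "\<And>l s. l \<in> levels lo N \<Longrightarrow> s \<in># S l \<Longrightarrow> 2 ^ (b - 1) \<le> s \<and> s < 2 ^ b"
    and hz: "(\<Sum>l\<in>levels lo N. size (S l)) < 2 ^ b"
    and hnonempty: "(\<Sum>l\<in>levels lo N. size (S l)) \<ge> 1"
    and hK: "0 < K" and hKL: "K \<le> L"
    and hKN: "2 ^ K > N"
  shows "(A_tot lo N (SS lo N S) G \<ge> 2 ^ K \<longrightarrow>
            expected_refinements b lo N (SS lo N S) G
              \<le> ennreal (real N / (2 ^ K - real N)))
       \<and> (A_tot lo N (SS lo N S) G \<ge> 2 ^ L \<longrightarrow>
            expected_refinements b lo N (SS lo N S) G
              \<le> ennreal (real N / (2 ^ L - real N)))"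
proof -
  have ne: "{l \<in> levels lo N. SS lo N S l > 0} \<noteq> {}" by (rule ne_lemma[OF hsig hnonempty])
  have K: "expected_refinements b lo N (SS lo N S) G \<le> ennreal (real N / (2 ^ M - real N))"
    if A: "A_tot lo N (SS lo N S) G \<ge> 2 ^ M" and MN: "2 ^ M > N" for M :: nat
  proof -
    have "real N < real (2 ^ M)" using MN by (simp only: of_nat_less_iff)
    then have MN': "(2::real) ^ M > real N" by simp
    have "real_of_int (2 ^ M) \<le> real_of_int (A_tot lo N (SS lo N S) G)" using A by (simp only: of_int_le_iff)
    then have A': "real_of_int (A_tot lo N (SS lo N S) G) \<ge> 2 ^ M" by simp
    have "int N < int (2 ^ M)" using MN by (simp only: of_nat_less_iff)
    then have "int N < 2 ^ M" by (simp only: of_nat_power of_nat_numeral)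
    then have AN: "int N < A_tot lo N (SS lo N S) G" using A by linarith
    show ?thesis using main_bound[OF ne AN] bound_mono[OF A' MN'] by (rule order_trans)
  qed
  have "(2::nat) ^ K \<le> 2 ^ L" by (rule power_increasing[OF hKL]) simp
  then have LN: "2 ^ L > N" using hKN by linarith
  show ?thesis
  proof (intro conjI impI)
    assume "A_tot lo N (SS lo N S) G \<ge> 2 ^ K"
    then show "expected_refinements b lo N (SS lo N S) G \<le> ennreal (real N / (2 ^ K - real N))" by (rule K[OF _ hKN])
  next
    assume "A_tot lo N (SS lo N S) G \<ge> 2 ^ L"
    then show "expected_refinements b lo N (SS lo N S) G \<le> ennreal (real N / (2 ^ L - real N))" by (rule K[OF _ LN])
  qed
qed

end
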